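(* Let $1\le b<\frac{n}{2}-1$, and let $T$ be a tree attaining the maximum value of $M_1$ over $\mathcal{CT}^*_{n,b}$, or a tree attaining the maximum value of $M_2$ over $\mathcal{CT}^*_{n,b}$. Then $T$ has a vertex of degree $2$ (i.e. $n_2>0$) if and only if $b<\frac{n-2}{3}$.
   Context: A chemical tree is a tree with maximum degree at most $4$. A branching vertex is a vertex of degree greater than $2$. $\mathcal{CT}^*_{n,b}$ is the class of all $n$-vertex chemical trees with exactly $b$ branching vertices. $n_2$ denotes the number of vertices of degree $2$. $M_1(G)=\sum_v d_v^2$ and $M_2(G)=\sum_{uv\in E(G)}d_ud_v$, where $d_v$ is the degree of $v$. *)

theory Defs
  imports Complex_Main
begin

text \<open>Graphs on the labelled vertex set {0..<n}; edges are 2-element sets of vertices.\<close>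

definition deg :: "nat set set \<Rightarrow> nat \<Rightarrow> nat" where
  "deg E v = card {u. {u, v} \<in> E}"

definition is_tree :: "nat \<Rightarrow> nat set set \<Rightarrow> bool" where
  "is_tree n E \<longleftrightarrow> n \<ge> 1
     \<and> E \<subseteq> {{u, v} | u v. u < n \<and> v < n \<and> u \<noteq> v}
     \<and> (\<forall>u<n. \<forall>v<n. (u, v) \<in> {(x, y). {x, y} \<in> E}\<^sup>*)
     \<and> card E = n - 1"

definition chemical_tree :: "nat \<Rightarrow> nat set set \<Rightarrow> bool" where
  "chemical_tree n E \<longleftrightarrow> is_tree n E \<and> (\<forall>v<n. deg E v \<le> 4)"

definition num_branching :: "nat \<Rightarrow> nat set set \<Rightarrow> nat" where
  "num_branching n E = card {v. v < n \<and> deg E v > 2}"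

definition n2 :: "nat \<Rightarrow> nat set set \<Rightarrow> nat" where
  "n2 n E = card {v. v < n \<and> deg E v = 2}"

definition CT_star :: "nat \<Rightarrow> nat \<Rightarrow> nat set set set" where
  "CT_star n b = {E. chemical_tree n E \<and> num_branching n E = b}"

definition M1 :: "nat \<Rightarrow> nat set set \<Rightarrow> nat" where
  "M1 n E = (\<Sum>v<n. (deg E v)^2)"

definition M2 :: "nat set set \<Rightarrow> nat" where
  "M2 E = (\<Sum>e\<in>E. \<Prod>v\<in>e. deg E v)"

end

theory Submission
  imports Defs
begin


definition erel :: "nat set set \<Rightarrow> (nat \<times> nat) set" where
  "erel F = {(x,y). {x,y} \<in> F}"
definition cmp :: "nat set set \<Rightarrow> nat \<Rightarrow> nat set" where
  "cmp F z = {t. (z,t) \<in> (erel F)\<^sup>*}"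

lemma erel_sym1: "(x,y) \<in> erel F \<Longrightarrow> (y,x) \<in> erel F"
  unfolding erel_def by (auto simp: insert_commute)

lemma erel_sym: "(x,y) \<in> (erel F)\<^sup>* \<Longrightarrow> (y,x) \<in> (erel F)\<^sup>*"
proof (induction rule: rtrancl_induct)
  case base then show ?case by simp
next
  case (step y z)
  then show ?case using erel_sym1 converse_rtrancl_into_rtrancl by metis
qed

lemma cmp_eq:
  assumes "t \<in> cmp F z" shows "cmp F t = cmp F z"
proof -
  have zt: "(z,t) \<in> (erel F)\<^sup>*" using assms by (simp add: cmp_def)
  have tz: "(t,z) \<in> (erel F)\<^sup>*" by (rule erel_sym[OF zt])
  show ?thesis
  proof (rule set_eqI)
    fix s show "s \<in> cmp F t \<longleftrightarrow> s \<in> cmp F z"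
      unfolding cmp_def using rtrancl_trans[OF zt, of s] rtrancl_trans[OF tz, of s] by auto
  qed
qed

lemma cmp_same:
  assumes "x \<notin> cmp F z" "y \<notin> cmp F z"
  shows "cmp (insert {x,y} F) z = cmp F z"
proof
  show "cmp F z \<subseteq> cmp (insert {x,y} F) z"
    unfolding cmp_def erel_def by (auto elim: rtrancl_mono[THEN subsetD, rotated])
  show "cmp (insert {x,y} F) z \<subseteq> cmp F z"
  proof
    fix t assume "t \<in> cmp (insert {x,y} F) z"
    then have "(z,t) \<in> (erel (insert {x,y} F))\<^sup>*" by (simp add: cmp_def)
    then show "t \<in> cmp F z"
    proof (induction rule: rtrancl_induct)
      case base then show ?case by (simp add: cmp_def)
    next
      case (step s t)
      then have "{s,t} \<in> insert {x,y} F" by (simp add: erel_def)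
      moreover have "s \<noteq> x" "s \<noteq> y" using step assms by auto
      ultimately have "{s,t} \<in> F" by (auto simp: doubleton_eq_iff)
      then show ?case using step(3) unfolding cmp_def erel_def
        by (simp add: rtrancl_into_rtrancl)
    qed
  qed
qed

lemma cmp_count:
  assumes "finite F" "finite A" "\<forall>e\<in>F. \<exists>x y. e = {x,y} \<and> x \<in> A \<and> y \<in> A"
  shows "card A \<le> card F + card (cmp F ` A)"
  using assms(1,3)
proof (induction F rule: finite_induct)
  case empty
  have "cmp {} z = {z}" for z unfolding cmp_def erel_def by auto
  then have "cmp {} ` A = (\<lambda>z. {z}) ` A" by auto
  moreover have "card ((\<lambda>z. {z}) ` A) = card A" by (rule card_image) (auto simp: inj_on_def)
  ultimately show ?case by simp
next
  case (insert e F)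
  then obtain x y where e: "e = {x,y}" "x \<in> A" "y \<in> A" by blast
  let ?C = "cmp F" and ?C' = "cmp (insert e F)"
  define B where "B = {S \<in> ?C' ` A. x \<notin> S \<and> y \<notin> S}"
  have 1: "?C ` A \<subseteq> {?C x, ?C y} \<union> B"
  proof
    fix S assume "S \<in> ?C ` A"
    then obtain z where z: "z \<in> A" "S = ?C z" by blast
    show "S \<in> {?C x, ?C y} \<union> B"
    proof (cases "x \<in> ?C z \<or> y \<in> ?C z")
      case True then show ?thesis using cmp_eq z by auto
    next
      case False
      then have "?C' z = ?C z" using cmp_same e by auto
      then show ?thesis using False z unfolding B_def by auto
    qed
  qed
  have xC: "x \<in> ?C' x" unfolding cmp_def by simp
  have 2: "insert (?C' x) B \<subseteq> ?C' ` A" using e unfolding B_def by auto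
  have fB: "finite B" unfolding B_def using assms(2) by auto
  have "card (?C ` A) \<le> card ({?C x, ?C y} \<union> B)"
    by (rule card_mono) (use fB 1 in auto)
  also have "\<dots> \<le> card {?C x, ?C y} + card B" by (rule card_Un_le)
  also have "\<dots> \<le> 2 + card B" by (simp add: card_insert_if)
  finally have c1: "card (?C ` A) \<le> 2 + card B" .
  have "card B + 1 = card (insert (?C' x) B)" using xC fB unfolding B_def by simp
  also have "\<dots> \<le> card (?C' ` A)" by (rule card_mono) (use 2 assms(2) in auto)
  finally have "card (?C ` A) \<le> card (?C' ` A) + 1" using c1 by simp
  moreover have "card A \<le> card F + card (?C ` A)" using insert by auto
  ultimately show ?case using insert by simp
qed

lemma finite_E:
  fixes E :: "nat set set"
  assumes "E \<subseteq> {{u, v} | u v. u < n \<and> v < n \<and> u \<noteq> v}"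
  shows "finite E"
proof -
  have "E \<subseteq> Pow {..<n}" using assms by auto
  then show ?thesis by (rule finite_subset) simp
qed

lemma conn_bound:
  fixes E :: "nat set set"
  assumes "E \<subseteq> {{u, v} | u v. u < n \<and> v < n \<and> u \<noteq> v}" "n \<ge> 1"
    "\<forall>u<n. \<forall>v<n. (u, v) \<in> (erel E)\<^sup>*"
  shows "n \<le> card E + 1"
proof -
  have fin: "finite E" using finite_E[OF assms(1)] .
  have "cmp E ` {..<n} = {cmp E 0}"
  proof -
    have "cmp E z = cmp E 0" if "z < n" for z
    proof -
      have "(z,0) \<in> (erel E)\<^sup>*" using assms(2,3) that by blast
      then have "0 \<in> cmp E z" by (simp add: cmp_def)
      then show ?thesis using cmp_eq by metis
    qed
    moreover have "0 \<in> {..<n}" using assms(2) by simp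
    ultimately show ?thesis by blast
  qed
  moreover have "card {..<n} \<le> card E + card (cmp E ` {..<n})"
  proof (rule cmp_count)
    show "\<forall>e\<in>E. \<exists>x y. e = {x, y} \<and> x \<in> {..<n} \<and> y \<in> {..<n}"
      using assms(1) by blast
  qed (use fin in simp_all)
  ultimately show ?thesis by simp
qed

lemma tree_facts:
  assumes "is_tree n E"
  shows "E \<subseteq> {{u, v} | u v. u < n \<and> v < n \<and> u \<noteq> v}" "finite E" "n \<ge> 1"
    "\<forall>u<n. \<forall>v<n. (u, v) \<in> (erel E)\<^sup>*" "card E = n - 1"
proof -
  show 1: "E \<subseteq> {{u, v} | u v. u < n \<and> v < n \<and> u \<noteq> v}" using assms unfolding is_tree_def by blast
  show "finite E" using finite_E[OF 1] .
  show "n \<ge> 1" "card E = n - 1" using assms unfolding is_tree_def by blast+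
  show "\<forall>u<n. \<forall>v<n. (u, v) \<in> (erel E)\<^sup>*" using assms unfolding is_tree_def erel_def by blast
qed

lemma no_triangle:
  assumes T: "is_tree n E" and e: "{v,a} \<in> E" "{v,c} \<in> E" "{a,c} \<in> E"
    and d: "a \<noteq> c" "v \<noteq> a" "v \<noteq> c"
  shows False
proof -
  note tf = tree_facts[OF T]
  define E0 where "E0 = E - {{v,a}}"
  have va: "v < n" using tf(1) e(1) by (auto simp: doubleton_eq_iff)
  have toV: "(x, v) \<in> (erel E0)\<^sup>*" if "x < n" for x
  proof -
    have "(v, x) \<in> (erel E)\<^sup>*" using tf(4) va that by auto
    then show ?thesis
    proof (induction rule: rtrancl_induct)
      case base then show ?case by simp
    next
      case (step y z)
      then have yz: "{y,z} \<in> E" by (simp add: erel_def)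
      show ?case
      proof (cases "{y,z} = {v,a}")
        case True
        then have "z = v \<or> z = a" by (auto simp: doubleton_eq_iff)
        then show ?thesis
        proof
          assume "z = a"
          have "(a,c) \<in> erel E0" using e d unfolding E0_def erel_def by (auto simp: doubleton_eq_iff)
          moreover have "(c,v) \<in> erel E0" using e d unfolding E0_def erel_def by (auto simp: doubleton_eq_iff insert_commute)
          ultimately show ?thesis using \<open>z = a\<close> by auto
        qed simp
      next
        case False
        then have "(z,y) \<in> erel E0" using yz unfolding E0_def erel_def by (auto simp: insert_commute)
        then show ?thesis using step(3) by (rule converse_rtrancl_into_rtrancl)
      qed
    qed
  qed
  have "\<forall>u<n. \<forall>w<n. (u, w) \<in> (erel E0)\<^sup>*"
    using toV erel_sym rtrancl_trans by meson
  moreover have "E0 \<subseteq> {{u, v} | u v. u < n \<and> v < n \<and> u \<noteq> v}" using tf(1) unfolding E0_def by auto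
  ultimately have "n \<le> card E0 + 1" using conn_bound tf(3) by blast
  moreover have "card E0 = card E - 1" unfolding E0_def using e tf(2) by simp
  moreover have "card E \<ge> 1" using e tf(2) by (metis One_nat_def Suc_leI card_gt_0_iff empty_iff)
  ultimately show False using tf(5) by simp
qed

lemma nbr_sub:
  fixes E :: "nat set set"
  assumes "E \<subseteq> {{u, v} | u v. u < n \<and> v < n \<and> u \<noteq> v}"
  shows "{u. {u,x} \<in> E} \<subseteq> {..<n}"
  using assms by (auto simp: doubleton_eq_iff)

lemma deg_pos:
  assumes T: "is_tree n E" and "n \<ge> 2" "x < n"
  shows "deg E x \<ge> 1"
proof -
  note tf = tree_facts[OF T]
  define u where "u = (if x = 0 then 1 else 0::nat)"
  have u: "u < n" "u \<noteq> x" using assms unfolding u_def by auto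
  have "(x,u) \<in> (erel E)\<^sup>*" using tf(4) u assms by auto
  then obtain y where "(x,y) \<in> erel E" using u(2) by (cases rule: converse_rtranclE) auto
  then have "y \<in> {u. {u,x} \<in> E}" by (simp add: erel_def insert_commute)
  moreover have "finite {u. {u,x} \<in> E}" using nbr_sub[OF tf(1)] finite_subset by blast
  ultimately show ?thesis unfolding deg_def
    by (metis One_nat_def Suc_leI card_gt_0_iff empty_iff)
qed

lemma deg_card_edges:
  fixes E :: "nat set set"
  assumes "E \<subseteq> {{u, v} | u v. u < n \<and> v < n \<and> u \<noteq> v}"
  shows "deg E x = card {e\<in>E. x \<in> e}"
  unfolding deg_def
proof (rule bij_betw_same_card[of "\<lambda>u. {u,x}"])
  show "bij_betw (\<lambda>u. {u, x}) {u. {u, x} \<in> E} {e \<in> E. x \<in> e}"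
    unfolding bij_betw_def
  proof
    show "inj_on (\<lambda>u. {u, x}) {u. {u, x} \<in> E}" by (auto simp: inj_on_def doubleton_eq_iff)
    show "(\<lambda>u. {u, x}) ` {u. {u, x} \<in> E} = {e \<in> E. x \<in> e}"
    proof
      show "{e \<in> E. x \<in> e} \<subseteq> (\<lambda>u. {u, x}) ` {u. {u, x} \<in> E}"
      proof
        fix e assume "e \<in> {e \<in> E. x \<in> e}"
        then obtain p q where "e = {p,q}" "e \<in> E" "x \<in> e" using assms by blast
        then show "e \<in> (\<lambda>u. {u, x}) ` {u. {u, x} \<in> E}"
          by (auto simp: insert_commute)
      qed
    qed auto
  qed
qed

lemma handshake:
  fixes E :: "nat set set"
  assumes "E \<subseteq> {{u, v} | u v. u < n \<and> v < n \<and> u \<noteq> v}"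
  shows "(\<Sum>x<n. deg E x) = 2 * card E"
proof -
  have fin: "finite E" using finite_E[OF assms] .
  have "(\<Sum>x<n. deg E x) = (\<Sum>x<n. \<Sum>e\<in>E. if x \<in> e then 1 else 0)"
    using deg_card_edges[OF assms] fin by (simp add: sum.inter_filter[symmetric])
  also have "\<dots> = (\<Sum>e\<in>E. \<Sum>x<n. if x \<in> e then 1 else 0)" by (rule sum.swap)
  also have "\<dots> = (\<Sum>e\<in>E. 2)"
  proof (rule sum.cong)
    fix e assume "e \<in> E"
    then obtain p q where pq: "e = {p,q}" "p < n" "q < n" "p \<noteq> q" using assms by blast
    have "(\<Sum>x<n. if x \<in> e then 1 else 0) = card {x \<in> {..<n}. x \<in> e}"
      by (simp add: sum.inter_filter[symmetric])
    also have "{x \<in> {..<n}. x \<in> e} = {p,q}" using pq by auto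
    finally show "(\<Sum>x<n. if x \<in> e then 1 else 0) = (2::nat)" using pq by simp
  qed simp
  finally show ?thesis by simp
qed



lemma card_swap1:
  assumes "finite S" "q \<in> S" "p \<notin> S"
  shows "card (insert p (S - {q})) = card S"
  using assms card_gt_0_iff[of S] by (auto simp: card_Diff_singleton)

lemma sum_two:
  assumes "finite A" "x \<in> A" "y \<in> A" "x \<noteq> y"
  shows "sum f A = f x + f y + sum f (A - {x,y})"
proof -
  have "sum f A = f x + sum f (A - {x})" using assms by (simp add: sum.remove)
  also have "sum f (A - {x}) = f y + sum f (A - {x} - {y})" using assms by (simp add: sum.remove)
  also have "A - {x} - {y} = A - {x,y}" by auto
  finally show ?thesis by (simp add: add.assoc)
qed

lemma move:
  assumes T: "is_tree n E" and d4: "\<forall>x<n. deg E x \<le> 4" and n2: "n \<ge> 2"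
    and v: "v < n" "deg E v = 2" and w: "w < n" "deg E w = 3"
  shows "\<exists>E'. E' \<in> CT_star n (num_branching n E) \<and> M1 n E < M1 n E' \<and> M2 E < M2 E'"
proof -
  note tf = tree_facts[OF T]
  define N where "N x = {u. {u,x} \<in> E}" for x
  have finN: "finite (N x)" for x using nbr_sub[OF tf(1)] finite_subset unfolding N_def by blast
  have degN: "deg E x = card (N x)" for x unfolding deg_def N_def by simp
  have vN: "x \<notin> N x" for x using tf(1) unfolding N_def by (auto simp: doubleton_eq_iff)
  have Nsym: "u \<in> N x \<longleftrightarrow> x \<in> N u" for u x unfolding N_def by (simp add: insert_commute)
  have wv: "w \<noteq> v" using v w by auto
  obtain a0 c0 where ac0: "N v = {a0,c0}" "a0 \<noteq> c0" using v(2) card_2_iff degN by metis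
  obtain a c where Nv: "N v = {a,c}" "a \<noteq> c" "w \<noteq> c"
  proof (cases "w = c0")
    case True then show ?thesis using that[of c0 a0] ac0 by (auto simp: insert_commute)
  next
    case False then show ?thesis using that[of a0 c0] ac0 by auto
  qed
  have av: "a \<noteq> v" "c \<noteq> v" using Nv vN by blast+
  have ac_lt: "a < n" "c < n" using Nv nbr_sub[OF tf(1)] unfolding N_def by auto
  have eva: "{v,a} \<in> E" "{v,c} \<in> E" using Nv unfolding N_def by (auto simp: insert_commute)
  have nac: "{a,c} \<notin> E" using no_triangle[OF T eva] Nv(2) av by auto
  have cNa: "c \<notin> N a" using nac unfolding N_def by (simp add: insert_commute)
  have vNa: "v \<in> N a" "v \<in> N c" using Nsym Nv by auto
  have vE: "e = {v,a} \<or> e = {v,c}" if ee: "e \<in> E" "v \<in> e" for e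
  proof -
    obtain p q where pq: "e = {p,q}" "p \<noteq> q" using ee tf(1) by blast
    then have "e = {v,p} \<or> e = {v,q}" using ee by auto
    moreover have "p \<in> N v \<or> p = v" "q \<in> N v \<or> q = v" using pq ee unfolding N_def by (auto simp: insert_commute)
    ultimately show ?thesis using Nv ee pq vN by auto
  qed
  have vwE: "w = a" if "{v,w} \<in> E"
  proof -
    have "w \<in> N v" using that unfolding N_def by (simp add: insert_commute)
    then show ?thesis using Nv by auto
  qed
  define E' where "E' = insert {v,w} (insert {a,c} (E - {{v,a},{v,c}}))"
  define N' where "N' x = {u. {u,x} \<in> E'}" for x
  have degN': "deg E' x = card (N' x)" for x unfolding deg_def N'_def by simp
  have N'v: "N' v = {w}"
  proof -
    have "u \<in> N' v \<longleftrightarrow> u = w" for u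
    proof
      assume "u \<in> N' v"
      then have "{u,v} = {v,w} \<or> {u,v} = {a,c} \<or> ({u,v} \<in> E \<and> {u,v} \<noteq> {v,a} \<and> {u,v} \<noteq> {v,c})"
        unfolding N'_def E'_def by auto
      then show "u = w"
      proof (elim disjE)
        assume "{u,v} \<in> E \<and> {u,v} \<noteq> {v,a} \<and> {u,v} \<noteq> {v,c}"
        then show ?thesis using vE[of "{u,v}"] by auto
      qed (use av wv in \<open>auto simp: doubleton_eq_iff\<close>)
    qed (auto simp: N'_def E'_def insert_commute)
    then show ?thesis by auto
  qed
  have N'w: "N' w = insert (if w = a then c else v) (N w)"
  proof (cases "w = a")
    case True
    have "u \<in> N' w \<longleftrightarrow> u \<in> insert c (N w)" for u
      using True av Nv eva nac vNa unfolding N'_def E'_def N_def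
      by (auto simp: doubleton_eq_iff insert_commute)
    then show ?thesis using True by auto
  next
    case False
    have "u \<in> N' w \<longleftrightarrow> u \<in> insert v (N w)" for u
      using False av Nv eva wv unfolding N'_def E'_def N_def
      by (auto simp: doubleton_eq_iff insert_commute)
    then show ?thesis using False by auto
  qed
  have N'a: "N' a = insert c (N a - {v})" if "a \<noteq> w"
  proof -
    have "u \<in> N' a \<longleftrightarrow> u \<in> insert c (N a - {v})" for u
      using that av Nv eva nac unfolding N'_def E'_def N_def
      by (auto simp: doubleton_eq_iff insert_commute)
    then show ?thesis by auto
  qed
  have N'c: "N' c = insert a (N c - {v})"
  proof -
    have "u \<in> N' c \<longleftrightarrow> u \<in> insert a (N c - {v})" for u
      using Nv av Nv eva nac unfolding N'_def E'_def N_def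
      by (auto simp: doubleton_eq_iff insert_commute)
    then show ?thesis by auto
  qed
  have N'x: "N' x = N x" if "x \<noteq> v" "x \<noteq> w" "x \<noteq> a" "x \<noteq> c" for x
  proof -
    have "u \<in> N' x \<longleftrightarrow> u \<in> N x" for u
      using that unfolding N'_def E'_def N_def
      by (auto simp: doubleton_eq_iff)
    then show ?thesis by auto
  qed
  have dv': "deg E' v = 1" using N'v degN' by simp
  have dw': "deg E' w = 4"
  proof -
    have "(if w = a then c else v) \<notin> N w" using cNa Nsym Nv Nv(3) wv by auto
    then show ?thesis using N'w degN' degN w(2) finN by simp
  qed
  have dx': "deg E' x = deg E x" if "x \<noteq> v" "x \<noteq> w" for x
  proof -
    consider "x = a" | "x = c" | "x \<noteq> a" "x \<noteq> c" by blast
    then show ?thesis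
    proof cases
      case 1 then show ?thesis using N'a that degN degN' card_swap1[OF finN vNa(1) cNa] by simp
    next
      case 2
      have "a \<notin> N c" using cNa Nsym by blast
      then show ?thesis using 2 N'c that degN degN' card_swap1[OF finN vNa(2)] by simp
    qed (use N'x that degN degN' in simp)
  qed
  have dle4: "deg E' x \<le> 4" if "x < n" for x
    using d4 that dv' dw' dx' by (cases "x = v"; cases "x = w") auto
  have br: "num_branching n E' = num_branching n E"
  proof -
    have "{x. x < n \<and> deg E' x > 2} = {x. x < n \<and> deg E x > 2}"
    proof -
      have "deg E' x > 2 \<longleftrightarrow> deg E x > 2" for x
        using dv' dw' dx' v w by (cases "x = v"; cases "x = w") auto
      then show ?thesis by auto
    qed
    then show ?thesis unfolding num_branching_def by simp
  qed
  have sub': "E' \<subseteq> {{u, v} | u v. u < n \<and> v < n \<and> u \<noteq> v}"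
    unfolding E'_def using tf(1) v w ac_lt wv Nv(2) by blast
  have conn_a: "(x, a) \<in> (erel E')\<^sup>*" if "x < n" for x
  proof -
    have P: "z \<noteq> v \<longrightarrow> (z, a) \<in> (erel E')\<^sup>*" if "(a, z) \<in> (erel E)\<^sup>*" for z
      using that
    proof (induction rule: rtrancl_induct)
      case base then show ?case by simp
    next
      case (step y z)
      then have yz: "{y,z} \<in> E" by (simp add: erel_def)
      show ?case
      proof (cases "y = v")
        case True
        then have "z \<in> N v" using yz unfolding N_def by (simp add: insert_commute)
        then have "z = a \<or> z = c" using Nv by auto
        moreover have "(c, a) \<in> erel E'" unfolding erel_def E'_def by (simp add: insert_commute)
        ultimately show ?thesis by auto
      next
        case False
        have "{y,z} \<in> E' \<or> z = v"
        proof (rule ccontr)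
          assume "\<not> ({y,z} \<in> E' \<or> z = v)"
          then have "{y,z} = {v,a} \<or> {y,z} = {v,c}" "z \<noteq> v" using yz unfolding E'_def by auto
          then show False using False by (auto simp: doubleton_eq_iff)
        qed
        then show ?thesis
        proof
          assume "{y,z} \<in> E'"
          then have "(z,y) \<in> erel E'" by (simp add: erel_def insert_commute)
          moreover have "(y,a) \<in> (erel E')\<^sup>*" using step(3) False by simp
          ultimately have "(z,a) \<in> (erel E')\<^sup>*" by (rule converse_rtrancl_into_rtrancl)
          then show ?thesis by simp
        qed simp
      qed
    qed
    show ?thesis
    proof (cases "x = v")
      case True
      have "(v, w) \<in> erel E'" unfolding erel_def E'_def by simp
      moreover have "(a, w) \<in> (erel E)\<^sup>*" using tf(4) ac_lt w by blast
      then have "(w, a) \<in> (erel E')\<^sup>*" using P[of w] wv by simp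
      ultimately have "(v, a) \<in> (erel E')\<^sup>*" by (rule converse_rtrancl_into_rtrancl)
      then show ?thesis using True by simp
    next
      case False
      have "(a, x) \<in> (erel E)\<^sup>*" using tf(4) ac_lt that by blast
      then show ?thesis using P[of x] False by simp
    qed
  qed
  have conn': "\<forall>u<n. \<forall>x<n. (u, x) \<in> {(x, y). {x, y} \<in> E'}\<^sup>*"
    using conn_a erel_sym rtrancl_trans unfolding erel_def by meson
  define \<phi> where "\<phi> e = (if e = {v,c} then {a,c} else if e = {v,a} then {v,w} else e)" for e
  have vwE': "e \<in> E \<Longrightarrow> e \<noteq> {v,a} \<Longrightarrow> e \<noteq> {v,w}" for e using vwE by auto
  have acvw: "{a,c} \<noteq> {v,w}" using av by (auto simp: doubleton_eq_iff)
  have vavc: "{v,a} \<noteq> {v,c}" using Nv(2) by (auto simp: doubleton_eq_iff)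
  have phi1: "\<phi> {v,c} = {a,c}" "\<phi> {v,a} = {v,w}" using vavc by (simp_all add: \<phi>_def)
  have phi2: "\<phi> e = e" if "e \<noteq> {v,a}" "e \<noteq> {v,c}" for e using that by (simp add: \<phi>_def)
  have phiac: "e = {v,c}" if "e \<in> E" "\<phi> e = {a,c}" for e
  proof (rule ccontr)
    assume ne: "e \<noteq> {v,c}"
    show False
    proof (cases "e = {v,a}")
      case True then show False using that phi1 acvw by simp
    next
      case False then show False using that phi2[OF False ne] nac by simp
    qed
  qed
  have phivw: "e = {v,a}" if "e \<in> E" "\<phi> e = {v,w}" for e
  proof (rule ccontr)
    assume ne: "e \<noteq> {v,a}"
    show False
    proof (cases "e = {v,c}")
      case True then show False using that phi1 acvw by simp
    next
      case False then show False using that phi2[OF ne False] vwE'[OF that(1) ne] by simp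
    qed
  qed
  have bij: "bij_betw \<phi> E E'"
    unfolding bij_betw_def
  proof
    show "inj_on \<phi> E"
    proof (rule inj_onI)
      fix x y assume xy: "x \<in> E" "y \<in> E" "\<phi> x = \<phi> y"
      consider "x = {v,c}" | "x = {v,a}" | "x \<noteq> {v,a}" "x \<noteq> {v,c}" by blast
      then show "x = y"
      proof cases
        case 1 then show ?thesis using phiac[OF xy(2)] xy(3) phi1 by simp
      next
        case 2 then show ?thesis using phivw[OF xy(2)] xy(3) phi1 by simp
      next
        case 3
        have "y \<noteq> {v,c}" using phiac[OF xy(1)] xy(3) phi1 3 by auto
        moreover have "y \<noteq> {v,a}" using phivw[OF xy(1)] xy(3) phi1 3 by auto
        ultimately show ?thesis using phi2 3 xy(3) by metis
      qed
    qed
    show "\<phi> ` E = E'"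
    proof
      show "\<phi> ` E \<subseteq> E'" unfolding \<phi>_def E'_def by auto
      show "E' \<subseteq> \<phi> ` E"
      proof
        fix e assume "e \<in> E'"
        then consider "e = {v,w}" | "e = {a,c}" | "e \<in> E" "e \<noteq> {v,a}" "e \<noteq> {v,c}"
          unfolding E'_def by auto
        then show "e \<in> \<phi> ` E"
        proof cases
          case 1 then show ?thesis using eva vavc unfolding \<phi>_def by (auto intro!: image_eqI[of _ _ "{v,a}"])
        next
          case 2 then show ?thesis using eva vavc unfolding \<phi>_def by (auto intro!: image_eqI[of _ _ "{v,c}"])
        next
          case 3 then show ?thesis unfolding \<phi>_def by (auto intro!: image_eqI[of _ _ e])
        qed
      qed
    qed
  qed
  have cardE': "card E' = n - 1" using bij_betw_same_card[OF bij] tf(5) by simp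
  have tree': "is_tree n E'" unfolding is_tree_def using tf(3) sub' conn' cardE' by blast
  have ct': "E' \<in> CT_star n (num_branching n E)"
    unfolding CT_star_def chemical_tree_def using tree' dle4 br by simp
  have m1: "M1 n E < M1 n E'"
  proof -
    have "M1 n E' = deg E' v ^ 2 + deg E' w ^ 2 + (\<Sum>x\<in>{..<n} - {v,w}. deg E' x ^ 2)"
      unfolding M1_def using v w wv by (intro sum_two) auto
    also have "(\<Sum>x\<in>{..<n} - {v,w}. deg E' x ^ 2) = (\<Sum>x\<in>{..<n} - {v,w}. deg E x ^ 2)"
      using dx' by (intro sum.cong) auto
    moreover have "M1 n E = deg E v ^ 2 + deg E w ^ 2 + (\<Sum>x\<in>{..<n} - {v,w}. deg E x ^ 2)"
      unfolding M1_def using v w wv by (intro sum_two) auto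
    ultimately show ?thesis using dv' dw' v w by simp
  qed
  define P where "P e = (\<Prod>x\<in>e. deg E x)" for e
  define P' where "P' e = (\<Prod>x\<in>e. deg E' x)" for e
  have M2E: "M2 E = sum P E" unfolding M2_def P_def by simp
  have M2E': "M2 E' = sum (\<lambda>e. P' (\<phi> e)) E"
  proof -
    have "M2 E' = sum P' E'" unfolding M2_def P'_def by simp
    also have "\<dots> = sum (\<lambda>e. P' (\<phi> e)) E" using sum.reindex_bij_betw[OF bij, of P'] by simp
    finally show ?thesis .
  qed
  define R where "R = E - {{v,a},{v,c}}"
  have degpos: "deg E x \<ge> 1" if "x < n" for x using deg_pos[OF T n2 that] .
  have pw: "P' e \<ge> P e + (if w \<in> e then 1 else 0)" if eR: "e \<in> R" for e
  proof -
    obtain p q where pq: "e = {p,q}" "p < n" "q < n" "p \<noteq> q" using eR tf(1) unfolding R_def by blast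
    have "v \<notin> e" using vE eR unfolding R_def by auto
    then have pqv: "p \<noteq> v" "q \<noteq> v" using pq by auto
    have Pe: "P e = deg E p * deg E q" "P' e = deg E' p * deg E' q" unfolding P_def P'_def using pq by auto
    consider "p = w" | "q = w" | "p \<noteq> w" "q \<noteq> w" by blast
    then show ?thesis
    proof cases
      case 1
      then have "P' e = 4 * deg E q" using Pe dw' dx' pqv pq by simp
      moreover have "P e = 3 * deg E q" using Pe w 1 by simp
      ultimately show ?thesis using degpos[OF pq(3)] by simp
    next
      case 2
      then have "P' e = deg E p * 4" using Pe dw' dx' pqv pq by simp
      moreover have "P e = deg E p * 3" using Pe w 2 by simp
      ultimately show ?thesis using degpos[OF pq(2)] by simp
    qed (use Pe dx' pqv pq in simp)
  qed
  have finR: "finite R" using tf(2) unfolding R_def by simp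
  have sumR: "sum P' R \<ge> sum P R + card {e \<in> R. w \<in> e}"
  proof -
    have "sum P R + card {e \<in> R. w \<in> e} = (\<Sum>e\<in>R. P e + (if w \<in> e then 1 else 0))"
      using finR by (simp add: sum.distrib sum.inter_filter[symmetric])
    also have "\<dots> \<le> sum P' R" using pw by (intro sum_mono) auto
    finally show ?thesis .
  qed
  have phiR: "sum (\<lambda>e. P' (\<phi> e)) R = sum P' R"
    using phi2 unfolding R_def by (intro sum.cong) auto
  have s1: "M2 E = P {v,a} + P {v,c} + sum P R"
    unfolding M2E R_def using tf(2) eva vavc by (rule sum_two)
  have s2: "M2 E' = P' {v,w} + P' {a,c} + sum P' R"
  proof -
    have "M2 E' = P' (\<phi> {v,a}) + P' (\<phi> {v,c}) + sum (\<lambda>e. P' (\<phi> e)) R"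
      unfolding M2E' R_def using tf(2) eva vavc by (rule sum_two)
    then show ?thesis using phi1 phiR by simp
  qed
  have Pva: "P {v,a} = 2 * deg E a" "P {v,c} = 2 * deg E c"
    unfolding P_def using av v(2) by auto
  have Pvw: "P' {v,w} = 4" unfolding P'_def using wv dv' dw' by simp
  have Pac: "P' {a,c} = deg E' a * deg E c" unfolding P'_def using Nv(2) dx' av Nv(3) by simp
  have Ew: "card {e \<in> E. w \<in> e} = 3" using deg_card_edges[OF tf(1)] w by simp
  have dc: "1 \<le> deg E c" "deg E c \<le> 4" using degpos d4 ac_lt by auto
  have da: "1 \<le> deg E a" "deg E a \<le> 4" using degpos d4 ac_lt by auto
  have m2: "M2 E < M2 E'"
  proof (cases "w = a")
    case True
    have "{e \<in> R. w \<in> e} = {e \<in> E. w \<in> e} - {{v,a}}" unfolding R_def using True Nv av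
      by (auto simp: doubleton_eq_iff)
    then have "card {e \<in> R. w \<in> e} = 2" using Ew eva True tf(2) by simp
    moreover have "deg E' a = 4" "deg E a = 3" using True dw' w by auto
    ultimately show ?thesis using s1 s2 Pva Pvw Pac sumR dc by simp
  next
    case False
    have "{e \<in> R. w \<in> e} = {e \<in> E. w \<in> e}" unfolding R_def using False Nv av wv
      by auto
    then have "card {e \<in> R. w \<in> e} = 3" using Ew by simp
    moreover have "deg E' a = deg E a" using False dx' av by simp
    moreover have "deg E a * deg E c + 7 > 2 * deg E a + 2 * deg E c"
    proof -
      have "deg E a \<in> {1,2,3,4}" "deg E c \<in> {1,2,3,4}" using da dc by auto
      then show ?thesis by auto
    qed
    ultimately show ?thesis using s1 s2 Pva Pvw Pac sumR by simp
  qed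
  show ?thesis using ct' m1 m2 by blast
qed

lemma sum_ind:
  fixes n :: nat
  shows
  "(\<Sum>x<n. if P x then 1 else 0) = (card {x. x < n \<and> P x} :: nat)"
proof -
  have "card {x \<in> {..<n}. P x} = (\<Sum>x\<in>{x \<in> {..<n}. P x}. 1::nat)" by simp
  also have "\<dots> = (\<Sum>x<n. if P x then 1 else 0)" by (rule sum.inter_filter) simp
  also have "{x \<in> {..<n}. P x} = {x. x < n \<and> P x}" by auto
  finally show ?thesis by simp
qed

theorem lemma9:
  fixes n b :: nat and T :: "nat set set"
  assumes "1 \<le> b" and "real b < real n / 2 - 1"
    and "(T \<in> CT_star n b \<and> (\<forall>T'\<in>CT_star n b. M1 n T' \<le> M1 n T))
         \<or> (T \<in> CT_star n b \<and> (\<forall>T'\<in>CT_star n b. M2 T' \<le> M2 T))"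
  shows "n2 n T > 0 \<longleftrightarrow> real b < (real n - 2) / 3"
proof -
  have CT: "T \<in> CT_star n b" using assms(3) by blast
  have T: "is_tree n T" and d4: "\<forall>x<n. deg T x \<le> 4" and nb: "num_branching n T = b"
    using CT unfolding CT_star_def chemical_tree_def by auto
  have nbig: "2 * b + 2 < n"
  proof -
    have "real (2 * b + 2) < real n" using assms(2) by (simp add: field_simps)
    then show ?thesis by linarith
  qed
  have n2: "n \<ge> 2" using nbig by simp
  note tf = tree_facts[OF T]
  have dp: "deg T x \<ge> 1" if "x < n" for x using deg_pos[OF T n2 that] .
  have hs: "(\<Sum>x<n. deg T x) = 2 * (n - 1)" using handshake[OF tf(1)] tf(5) by simp
  have s2: "(\<Sum>x<n. if deg T x = 2 then 1 else 0) = n2 n T"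
    unfolding n2_def by (rule sum_ind)
  have sb: "(\<Sum>x<n. if deg T x > 2 then 1 else 0) = b"
    using nb unfolding num_branching_def by (simp add: sum_ind)
  have up: "(\<Sum>x<n. deg T x) \<le> (\<Sum>x<n. 1 + (if deg T x = 2 then 1 else 0) + 3 * (if deg T x > 2 then 1 else 0))"
  proof (rule sum_mono)
    fix x assume "x \<in> {..<n}"
    then have "1 \<le> deg T x" "deg T x \<le> 4" using dp d4 by auto
    then show "deg T x \<le> 1 + (if deg T x = 2 then 1 else 0) + 3 * (if deg T x > 2 then 1 else 0)"
      by auto
  qed
  also have "\<dots> = n + n2 n T + 3 * b"
    by (simp only: sum.distrib sum_distrib_left[symmetric]) (simp add: s2 sb)
  finally have upb: "2 * (n - 1) \<le> n + n2 n T + 3 * b" using hs by simp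
  have eq: "real b < (real n - 2) / 3 \<longleftrightarrow> 3 * b + 2 < n"
  proof -
    have "real b < (real n - 2) / 3 \<longleftrightarrow> real (3 * b + 2) < real n" by (simp add: field_simps)
    then show ?thesis by linarith
  qed
  show ?thesis unfolding eq
  proof
    assume "3 * b + 2 < n"
    then show "n2 n T > 0" using upb by linarith
  next
    assume pos: "n2 n T > 0"
    show "3 * b + 2 < n"
    proof (rule ccontr)
      assume big: "\<not> 3 * b + 2 < n"
      obtain v where v: "v < n" "deg T v = 2"
        using pos unfolding n2_def by (metis (mono_tags, lifting) card.empty empty_Collect_eq less_irrefl)
      have "\<exists>w<n. deg T w = 3"
      proof (rule ccontr)
        assume no3: "\<not> (\<exists>w<n. deg T w = 3)"
        have "(\<Sum>x<n. 1 + (if deg T x = 2 then 1 else 0) + 3 * (if deg T x > 2 then 1 else 0)) \<le> (\<Sum>x<n. deg T x)"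
        proof (rule sum_mono)
          fix x assume "x \<in> {..<n}"
          then have "1 \<le> deg T x" "deg T x \<le> 4" "deg T x \<noteq> 3" using dp d4 no3 by auto
          then show "1 + (if deg T x = 2 then 1 else 0) + 3 * (if deg T x > 2 then 1 else 0) \<le> deg T x"
            by auto
        qed
        also have "(\<Sum>x<n. 1 + (if deg T x = 2 then 1 else 0) + 3 * (if deg T x > 2 then 1 else 0)) = n + n2 n T + 3 * b"
          by (simp only: sum.distrib sum_distrib_left[symmetric]) (simp add: s2 sb)
        finally have "n + n2 n T + 3 * b \<le> 2 * (n - 1)" using hs by simp
        then show False using pos big by linarith
      qed
      then obtain w where w: "w < n" "deg T w = 3" by blast
      obtain E' where E': "E' \<in> CT_star n (num_branching n T)" "M1 n T < M1 n E'" "M2 T < M2 E'"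
        using move[OF T d4 n2 v w] by blast
      have E'b: "E' \<in> CT_star n b" using E'(1) nb by simp
      from assms(3) show False
      proof (elim disjE conjE)
        assume "\<forall>T'\<in>CT_star n b. M1 n T' \<le> M1 n T"
        then have "M1 n E' \<le> M1 n T" using E'b by blast
        then show False using E'(2) by simp
      next
        assume "\<forall>T'\<in>CT_star n b. M2 T' \<le> M2 T"
        then have "M2 E' \<le> M2 T" using E'b by blast
        then show False using E'(3) by simp
      qed
    qed
  qed
qed

end
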